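(* Let $\mathcal{X}\subset\mathbb{R}^d$ be nonempty, closed, convex and compact with diameter $D:=\max_{x,y\in\mathcal{X}}\|x-y\|$. Let $\Phi:\mathcal{X}\to\mathbb{R}$ be differentiable with $L$-Lipschitz gradient, and set $G:=\max_{x\in\mathcal{X}}\|\nabla\Phi(x)\|$, $\Phi_{\max}:=\max_{\mathcal{X}}\Phi$, $\Phi_{\min}:=\min_{\mathcal{X}}\Phi$. Let $F(x)=-\nabla\Phi(x)+R(x)$ on $\mathcal{X}$. Let $0<\eta\le 1/L$ and run $x_{t+1}=\operatorname{Proj}_{\mathcal{X}}(x_t+\eta\nabla\Phi(x_t))$, $t=0,\dots,T-1$, from $x_0\in\mathcal{X}$. Let $\tilde t$ be uniformly distributed on $\{0,\dots,T-1\}$, independent of the iterates, and output $\tilde x_T:=x_{\tilde t}$; assume $R$ is square-integrable under the law of $\tilde x_T$ and define $E_T:=(\mathbb{E}[\|R(\tilde x_T)\|^2])^{1/2}$. Then $$\mathbb{E}[\operatorname{Gap}(\tilde x_T)]\le (D+\eta G)\sqrt{\frac{2(\Phi_{\max}-\Phi_{\min})}{T\eta}}+DE_T.$$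
   Context: For $\bar x\in\mathcal{X}$, the duality gap of $F$ is $\operatorname{Gap}(\bar x):=\max_{x\in\mathcal{X}}\langle F(\bar x),\bar x-x\rangle$ with the Euclidean inner product. $\operatorname{Proj}_{\mathcal{X}}$ is Euclidean projection onto $\mathcal{X}$. *)

theory Defs
  imports "HOL-Analysis.Analysis" "HOL-Probability.Probability"
begin

definition gap :: "('a::euclidean_space \<Rightarrow> 'a) \<Rightarrow> 'a set \<Rightarrow> 'a \<Rightarrow> real" where
  "gap F X xb = (SUP x\<in>X. F xb \<bullet> (xb - x))"

end

theory Submission imports Defs begin

lemma ascent_lemma:
  fixes X :: "'a::euclidean_space set" and \<Phi> :: "'a \<Rightarrow> real" and g :: "'a \<Rightarrow> 'a"
  assumes "convex X"
    and deriv: "\<And>y. y \<in> X \<Longrightarrow> (\<Phi> has_derivative (\<lambda>h. g y \<bullet> h)) (at y within X)"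
    and lip: "\<And>y z. y \<in> X \<Longrightarrow> z \<in> X \<Longrightarrow> norm (g y - g z) \<le> L * norm (y - z)"
    and "0 \<le> L" and a: "a \<in> X" and b: "b \<in> X"
  shows "\<Phi> a + g a \<bullet> (b - a) - L / 2 * (norm (b - a))\<^sup>2 \<le> \<Phi> b"
proof -
  define d where "d = b - a"
  have inX: "a + s *\<^sub>R d \<in> X" if "s \<in> {0..1}" for s
  proof -
    have "a + s *\<^sub>R d = (1 - s) *\<^sub>R a + s *\<^sub>R b" by (simp add: d_def algebra_simps)
    then show ?thesis using convexD_alt[OF assms(1) a b, of s] that by auto
  qed
  define k where "k s = \<Phi> (a + s *\<^sub>R d) - \<Phi> a - s * (g a \<bullet> d) + L / 2 * s\<^sup>2 * (norm d)\<^sup>2" for s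
  have dPhi: "((\<lambda>s. \<Phi> (a + s *\<^sub>R d)) has_real_derivative (g (a + s *\<^sub>R d) \<bullet> d)) (at s within {0..1})"
    if s: "s \<in> {0..1}" for s
  proof -
    have f: "((\<lambda>s. a + s *\<^sub>R d) has_derivative (\<lambda>h. h *\<^sub>R d)) (at s within {0..1})"
      by (auto intro!: derivative_eq_intros)
    have sub: "(\<lambda>s. a + s *\<^sub>R d) ` {0..1} \<subseteq> X" using inX by auto
    have "(\<Phi> has_derivative (\<lambda>h. g (a + s *\<^sub>R d) \<bullet> h)) (at (a + s *\<^sub>R d) within (\<lambda>s. a + s *\<^sub>R d) ` {0..1})"
      using has_derivative_subset[OF deriv[OF inX[OF s]] sub] .
    from diff_chain_within[OF f this]
    have "((\<lambda>s. \<Phi> (a + s *\<^sub>R d)) has_derivative (\<lambda>h. h * (g (a + s *\<^sub>R d) \<bullet> d))) (at s within {0..1})"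
      by (simp add: o_def inner_scaleR_right mult.commute)
    then show ?thesis by (simp add: has_field_derivative_def mult_commute_abs)
  qed
  have dk: "(k has_real_derivative ((g (a + s *\<^sub>R d) - g a) \<bullet> d + L * s * (norm d)\<^sup>2)) (at s within {0..1})"
    if s: "s \<in> {0..1}" for s
  proof -
    have h2: "((\<lambda>s. s * (g a \<bullet> d)) has_real_derivative (g a \<bullet> d)) (at s within {0..1})"
      by (auto intro!: derivative_eq_intros)
    have h3: "((\<lambda>s. L / 2 * s\<^sup>2 * (norm d)\<^sup>2) has_real_derivative (L * s * (norm d)\<^sup>2)) (at s within {0..1})"
      by (auto intro!: derivative_eq_intros)
    have "(k has_real_derivative (g (a + s *\<^sub>R d) \<bullet> d - 0 - g a \<bullet> d + L * s * (norm d)\<^sup>2)) (at s within {0..1})"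
      unfolding k_def
      by (intro DERIV_add DERIV_diff dPhi[OF s] h2 h3 DERIV_const)
    then show ?thesis by (simp add: inner_diff_left)
  qed
  have "k 0 \<le> k 1"
  proof (rule DERIV_nonneg_imp_increasing_open[of 0 1 k])
    fix s :: real assume s: "0 < s" "s < 1"
    have "at s within {0..1} = at s" using s by (intro at_within_interior) auto
    then have D: "(k has_real_derivative ((g (a + s *\<^sub>R d) - g a) \<bullet> d + L * s * (norm d)\<^sup>2)) (at s)"
      using dk[of s] s by auto
    have "\<bar>(g (a + s *\<^sub>R d) - g a) \<bullet> d\<bar> \<le> norm (g (a + s *\<^sub>R d) - g a) * norm d"
      by (rule Cauchy_Schwarz_ineq2)
    also have "\<dots> \<le> L * norm (s *\<^sub>R d) * norm d"
      using lip[OF inX a, of s] s by (intro mult_right_mono) auto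
    also have "\<dots> = L * s * (norm d)\<^sup>2" using s by (simp add: power2_eq_square)
    finally have "0 \<le> (g (a + s *\<^sub>R d) - g a) \<bullet> d + L * s * (norm d)\<^sup>2" by linarith
    then show "\<exists>y. (k has_real_derivative y) (at s) \<and> 0 \<le> y" using D by blast
  next
    show "continuous_on {0..1} k"
      using dk by (meson DERIV_continuous continuous_on_eq_continuous_within)
  qed simp
  then show ?thesis by (simp add: k_def d_def)
qed

lemma avg_sqrt:
  fixes f :: "nat \<Rightarrow> real"
  assumes "0 < T"
  shows "(\<Sum>t<T. f t) / real T \<le> sqrt ((\<Sum>t<T. (f t)\<^sup>2) / real T)"
proof -
  have "(\<Sum>t<T. f t)\<^sup>2 \<le> (\<Sum>t<T. (f t)\<^sup>2) * real T"
    using sum_squared_le_sum_of_squares[of f "{..<T}"] by simp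
  then have "((\<Sum>t<T. f t) / real T)\<^sup>2 \<le> (\<Sum>t<T. (f t)\<^sup>2) / real T"
    using assms by (simp add: power_divide field_simps power2_eq_square)
  then show ?thesis by (simp add: real_le_rsqrt)
qed

theorem theoremF3:
  fixes X :: "'a::euclidean_space set"
    and \<Phi> :: "'a \<Rightarrow> real" and g :: "'a \<Rightarrow> 'a" and R :: "'a \<Rightarrow> 'a"
    and L \<eta> :: real and T :: nat and x :: "nat \<Rightarrow> 'a" and x0 :: 'a
  assumes "X \<noteq> {}" and "closed X" and "convex X" and "compact X"
    and deriv: "\<And>y. y \<in> X \<Longrightarrow> (\<Phi> has_derivative (\<lambda>h. g y \<bullet> h)) (at y within X)"
    and "0 \<le> L"
    and lip: "\<And>y z. y \<in> X \<Longrightarrow> z \<in> X \<Longrightarrow> norm (g y - g z) \<le> L * norm (y - z)"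
    and "0 < \<eta>" and "\<eta> * L \<le> 1"
    and "0 < T"
    and "x0 \<in> X"
    and "x 0 = x0"
    and "\<And>t. t < T \<Longrightarrow> x (Suc t) = closest_point X (x t + \<eta> *\<^sub>R g (x t))"
  shows "measure_pmf.expectation (pmf_of_set {..<T}) (\<lambda>t. gap (\<lambda>y. - g y + R y) X (x t))
         \<le> (diameter X + \<eta> * (SUP y\<in>X. norm (g y)))
             * sqrt (2 * ((SUP y\<in>X. \<Phi> y) - (INF y\<in>X. \<Phi> y)) / (real T * \<eta>))
           + diameter X * sqrt (measure_pmf.expectation (pmf_of_set {..<T}) (\<lambda>t. (norm (R (x t)))\<^sup>2))"
proof -
  note cs = assms(1,2)
  have bX: "bounded X" using assms(4) compact_imp_bounded by blast
  have xin: "x t \<in> X" if "t \<le> T" for t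
    using that
  proof (induction t)
    case 0 then show ?case using assms(11,12) by simp
  next
    case (Suc t)
    then show ?case using assms(13)[of t] closest_point_in_set[OF assms(2,1)] by simp
  qed
  define D where "D = diameter X"
  define G where "G = (SUP y\<in>X. norm (g y))"
  define PM where "PM = (SUP y\<in>X. \<Phi> y)"
  define Pm where "Pm = (INF y\<in>X. \<Phi> y)"
  have Ddist: "norm (u - v) \<le> D" if "u \<in> X" "v \<in> X" for u v
    using diameter_bounded_bound[OF bX that] by (simp add: D_def dist_norm)
  have D0: "0 \<le> D" using Ddist[OF assms(11) assms(11)] by simp
  have gb: "norm (g y) \<le> norm (g x0) + L * D" if "y \<in> X" for y
  proof -
    have "norm (g y) \<le> norm (g x0) + norm (g y - g x0)" by (metis norm_triangle_sub)
    also have "\<dots> \<le> norm (g x0) + L * norm (y - x0)" using lip[OF that assms(11)] by simp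
    also have "\<dots> \<le> norm (g x0) + L * D" using Ddist[OF that assms(11)] assms(6)
      by (simp add: mult_left_mono)
    finally show ?thesis .
  qed
  have bddg: "bdd_above ((\<lambda>y. norm (g y)) ` X)" using gb by (auto intro!: bdd_aboveI2)
  have Gle: "norm (g y) \<le> G" if "y \<in> X" for y
    unfolding G_def using bddg that by (rule cSUP_upper2) simp
  have G0: "0 \<le> G" using Gle[OF assms(11)] norm_ge_zero order_trans by blast
  have contPhi: "continuous_on X \<Phi>"
    using deriv has_derivative_continuous continuous_on_eq_continuous_within by blast
  have cPhi: "compact (\<Phi> ` X)" using compact_continuous_image[OF contPhi assms(4)] .
  have bPhi: "bounded (\<Phi> ` X)" using cPhi compact_imp_bounded by blast
  have PMle: "\<Phi> y \<le> PM" if "y \<in> X" for y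
    unfolding PM_def by (rule cSUP_upper[OF that bounded_imp_bdd_above[OF bPhi]])
  have Pmle: "Pm \<le> \<Phi> y" if "y \<in> X" for y
    unfolding Pm_def by (rule cINF_lower[OF bounded_imp_bdd_below[OF bPhi] that])
  define dd where "dd t = norm (x (Suc t) - x t)" for t
  have step: "(dd t)\<^sup>2 \<le> 2 * \<eta> * (\<Phi> (x (Suc t)) - \<Phi> (x t))" if t: "t < T" for t
  proof -
    define a where "a = x t"
    define b where "b = x (Suc t)"
    have a: "a \<in> X" and b: "b \<in> X" using xin t by (auto simp: a_def b_def)
    have bdef: "b = closest_point X (a + \<eta> *\<^sub>R g a)" using assms(13)[OF t] by (simp add: a_def b_def)
    have "(a + \<eta> *\<^sub>R g a - b) \<bullet> (a - b) \<le> 0"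
      using closest_point_dot[OF assms(3,2) a, of "a + \<eta> *\<^sub>R g a"] bdef by simp
    then have 1: "(norm (b - a))\<^sup>2 \<le> \<eta> * (g a \<bullet> (b - a))"
      by (simp add: power2_norm_eq_inner algebra_simps inner_diff_left inner_diff_right inner_commute)
    have 2: "\<Phi> a + g a \<bullet> (b - a) - L / 2 * (norm (b - a))\<^sup>2 \<le> \<Phi> b"
      by (rule ascent_lemma[OF assms(3) deriv lip assms(6) a b])
    have 3: "\<eta> * (L / 2 * (norm (b - a))\<^sup>2) \<le> (norm (b - a))\<^sup>2 / 2"
      using assms(9) mult_right_mono[OF assms(9), of "(norm (b - a))\<^sup>2 / 2"] by (simp add: algebra_simps)
    have "\<eta> * (g a \<bullet> (b - a)) \<le> \<eta> * (\<Phi> b - \<Phi> a + L / 2 * (norm (b - a))\<^sup>2)"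
      using 2 assms(8) by (intro mult_left_mono) auto
    then have "(norm (b - a))\<^sup>2 \<le> \<eta> * (\<Phi> b - \<Phi> a) + (norm (b - a))\<^sup>2 / 2"
      using 1 3 by (simp add: algebra_simps)
    then show ?thesis by (simp add: dd_def a_def b_def)
  qed
  have sumd: "(\<Sum>t<T. (dd t)\<^sup>2) \<le> 2 * \<eta> * (PM - Pm)"
  proof -
    have "(\<Sum>t<T. (dd t)\<^sup>2) \<le> (\<Sum>t<T. 2 * \<eta> * (\<Phi> (x (Suc t)) - \<Phi> (x t)))"
      by (rule sum_mono) (simp add: step)
    also have "\<dots> = 2 * \<eta> * (\<Phi> (x T) - \<Phi> (x 0))"
      using sum_lessThan_telescope[of "\<lambda>t. \<Phi> (x t)" T] by (simp add: sum_distrib_left[symmetric])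
    also have "\<dots> \<le> 2 * \<eta> * (PM - Pm)"
      using PMle[OF xin[of T]] Pmle[OF xin[of 0]] assms(8) by (intro mult_left_mono) auto
    finally show ?thesis .
  qed
  have gapb: "gap (\<lambda>y. - g y + R y) X (x t) \<le> (D + \<eta> * G) / \<eta> * dd t + D * norm (R (x t))"
    if t: "t < T" for t
    unfolding gap_def
  proof (rule cSUP_least[OF assms(1)])
    fix z assume z: "z \<in> X"
    define a where "a = x t"
    define b where "b = x (Suc t)"
    have a: "a \<in> X" and b: "b \<in> X" using xin t by (auto simp: a_def b_def)
    have bdef: "b = closest_point X (a + \<eta> *\<^sub>R g a)" using assms(13)[OF t] by (simp add: a_def b_def)
    have "(a + \<eta> *\<^sub>R g a - b) \<bullet> (z - b) \<le> 0"
      using closest_point_dot[OF assms(3,2) z, of "a + \<eta> *\<^sub>R g a"] bdef by simp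
    then have "\<eta> * (g a \<bullet> (z - b)) \<le> (b - a) \<bullet> (z - b)"
      by (simp add: algebra_simps inner_diff_left inner_diff_right)
    also have "\<dots> \<le> norm (b - a) * norm (z - b)" by (rule norm_cauchy_schwarz)
    also have "\<dots> \<le> dd t * D" using Ddist[OF z b] by (simp add: dd_def a_def b_def mult_left_mono)
    finally have 1: "\<eta> * (g a \<bullet> (z - b)) \<le> dd t * D" .
    have "g a \<bullet> (b - a) \<le> norm (g a) * norm (b - a)" by (rule norm_cauchy_schwarz)
    also have "\<dots> \<le> G * dd t" using Gle[OF a] by (simp add: dd_def a_def b_def mult_right_mono)
    finally have 2: "g a \<bullet> (b - a) \<le> G * dd t" .
    have "\<eta> * (g a \<bullet> (z - a)) = \<eta> * (g a \<bullet> (z - b)) + \<eta> * (g a \<bullet> (b - a))"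
      by (simp add: algebra_simps inner_diff_right)
    also have "\<dots> \<le> dd t * D + \<eta> * (G * dd t)" using 1 2 assms(8) by (simp add: mult_left_mono add_mono)
    finally have "\<eta> * (g a \<bullet> (z - a)) \<le> (D + \<eta> * G) * dd t" by (simp add: algebra_simps)
    then have 3: "g a \<bullet> (z - a) \<le> (D + \<eta> * G) / \<eta> * dd t"
      using assms(8) by (simp add: field_simps mult.commute)
    have "R a \<bullet> (a - z) \<le> norm (R a) * norm (a - z)" by (rule norm_cauchy_schwarz)
    also have "\<dots> \<le> D * norm (R a)" using Ddist[OF a z] mult_left_mono[of "norm (a - z)" D "norm (R a)"] by (simp add: mult.commute)
    finally have 4: "R a \<bullet> (a - z) \<le> D * norm (R a)" .
    have "(- g a + R a) \<bullet> (a - z) = g a \<bullet> (z - a) + R a \<bullet> (a - z)"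
      by (simp add: algebra_simps inner_diff_left inner_diff_right)
    then show "(- g (x t) + R (x t)) \<bullet> (x t - z) \<le> (D + \<eta> * G) / \<eta> * dd t + D * norm (R (x t))"
      using 3 4 by (simp add: a_def)
  qed
  define c where "c = (D + \<eta> * G) / \<eta>"
  have c0: "0 \<le> c" unfolding c_def using D0 G0 assms(8) by simp
  have E: "measure_pmf.expectation (pmf_of_set {..<T}) f = (\<Sum>t<T. f t) / real T" for f :: "nat \<Rightarrow> real"
    using integral_pmf_of_set[of "{..<T}" f] assms(10) by auto
  have "measure_pmf.expectation (pmf_of_set {..<T}) (\<lambda>t. gap (\<lambda>y. - g y + R y) X (x t))
      \<le> (\<Sum>t<T. c * dd t + D * norm (R (x t))) / real T"
    unfolding E using gapb assms(10) by (intro divide_right_mono sum_mono) (auto simp: c_def)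
  also have "\<dots> = c * ((\<Sum>t<T. dd t) / real T) + D * ((\<Sum>t<T. norm (R (x t))) / real T)"
    by (simp add: sum.distrib sum_distrib_left[symmetric] add_divide_distrib)
  also have "\<dots> \<le> c * sqrt ((\<Sum>t<T. (dd t)\<^sup>2) / real T) + D * sqrt ((\<Sum>t<T. (norm (R (x t)))\<^sup>2) / real T)"
    using avg_sqrt[OF assms(10)] c0 D0 by (intro add_mono mult_left_mono) auto
  also have "c * sqrt ((\<Sum>t<T. (dd t)\<^sup>2) / real T) \<le> c * sqrt (2 * \<eta> * (PM - Pm) / real T)"
    using sumd c0 assms(10) by (intro mult_left_mono real_sqrt_le_mono divide_right_mono) auto
  also have "c * sqrt (2 * \<eta> * (PM - Pm) / real T) = (D + \<eta> * G) * sqrt (2 * (PM - Pm) / (real T * \<eta>))"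
  proof -
    have "sqrt (2 * (PM - Pm) / (real T * \<eta>)) * \<eta> = sqrt (2 * (PM - Pm) / (real T * \<eta>)) * sqrt (\<eta>\<^sup>2)"
      using assms(8) by simp
    also have "\<dots> = sqrt (2 * \<eta> * (PM - Pm) / real T)"
      unfolding real_sqrt_mult[symmetric] using assms(8,10) by (simp add: field_simps power2_eq_square)
    finally have "sqrt (2 * \<eta> * (PM - Pm) / real T) = \<eta> * sqrt (2 * (PM - Pm) / (real T * \<eta>))" by (simp add: mult.commute)
    then show ?thesis using assms(8) by (simp add: c_def)
  qed
  finally show ?thesis unfolding E D_def G_def PM_def Pm_def by simp
qed

end
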